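(* Let $K$ be a field and $L$ a finite extension of $K$ of degree $n$. Let $(x_1,\dots,x_k)$ and $(y_1,\dots,y_\ell)$ be two $K$-linearly independent families of elements of $L$, and suppose $k+\ell\geqslant n+1$. Then the set $\{x_iy_j\ ;\ 1\leqslant i\leqslant k,\ 1\leqslant j\leqslant\ell\}$ spans $L$ as a $K$-vector space. *)

theory Defs
  imports "HOL-Algebra.Embedded_Algebras"
begin

end

theory Submission imports Defs begin

context field
begin

context fixes K assumes K: "subfield K R"
begin

lemma Kc: "K \<subseteq> carrier R" using subfieldE(3)[OF K] .

lemma combine_linear:
  assumes add: "\<And>a b. a \<in> carrier R \<Longrightarrow> b \<in> carrier R \<Longrightarrow> f (a \<oplus> b) = f a \<oplus> f b"
    and hom: "\<And>c a. c \<in> K \<Longrightarrow> a \<in> carrier R \<Longrightarrow> f (c \<otimes> a) = c \<otimes> f a"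
    and z: "f \<zero> = \<zero>"
  shows "set Cs \<subseteq> K \<Longrightarrow> set Ws \<subseteq> carrier R \<Longrightarrow> f (combine Cs Ws) = combine Cs (map f Ws)"
proof (induct Cs Ws rule: combine.induct)
  case (1 k Ks u Us)
  have "k \<in> carrier R" using 1 Kc by auto
  moreover have "set Ks \<subseteq> carrier R" using 1 Kc by auto
  ultimately show ?case using 1 add hom by (simp add: combine_in_carrier)
qed (auto simp: z)

lemma combine_zeros:
  "set Cs \<subseteq> carrier R \<Longrightarrow> set Ws \<subseteq> {\<zero>} \<Longrightarrow> combine Cs Ws = \<zero>"
  by (induct Cs Ws rule: combine.induct) auto

lemma combine_zero_coeffs:
  "set Cs \<subseteq> {\<zero>} \<Longrightarrow> set Ws \<subseteq> carrier R \<Longrightarrow> combine Cs Ws = \<zero>"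
  by (induct Cs Ws rule: combine.induct) auto

lemma combine_map_add:
  assumes "\<And>z. z \<in> set Zs \<Longrightarrow> f z \<in> carrier R" "\<And>z. z \<in> set Zs \<Longrightarrow> g z \<in> carrier R"
    "set Zs \<subseteq> carrier R"
  shows "combine (map (\<lambda>z. f z \<oplus> g z) Zs) Zs = combine (map f Zs) Zs \<oplus> combine (map g Zs) Zs"
  using assms
proof (induct Zs)
  case Nil thus ?case by simp
next
  case (Cons z Zs)
  have c: "combine (map f Zs) Zs \<in> carrier R" "combine (map g Zs) Zs \<in> carrier R"
    using Cons by (auto intro!: combine_in_carrier)
  have "f z \<in> carrier R" "g z \<in> carrier R" "z \<in> carrier R" using Cons by auto
  thus ?case using Cons c by (simp add: l_distr) algebra
qed

lemma combine_map_smult: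
  assumes "\<And>z. z \<in> set Zs \<Longrightarrow> f z \<in> carrier R" "c \<in> carrier R"
    "set Zs \<subseteq> carrier R"
  shows "combine (map (\<lambda>z. c \<otimes> f z) Zs) Zs = c \<otimes> combine (map f Zs) Zs"
  using assms
proof (induct Zs)
  case Nil thus ?case by simp
next
  case (Cons z Zs)
  have c: "combine (map f Zs) Zs \<in> carrier R"
    using Cons by (auto intro!: combine_in_carrier)
  have "f z \<in> carrier R" "z \<in> carrier R" using Cons by auto
  thus ?case using Cons c by (simp add: r_distr m_assoc)
qed


lemma key:
  assumes dim: "dimension n K (carrier R)"
    and xs: "independent K xs" and ys: "independent K ys"
    and len: "length xs + length ys \<ge> n + 1"
    and phiK: "\<And>a. a \<in> carrier R \<Longrightarrow> \<phi> a \<in> K"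
    and phiadd: "\<And>a b. a \<in> carrier R \<Longrightarrow> b \<in> carrier R \<Longrightarrow> \<phi> (a \<oplus> b) = \<phi> a \<oplus> \<phi> b"
    and phihom: "\<And>c a. c \<in> K \<Longrightarrow> a \<in> carrier R \<Longrightarrow> \<phi> (c \<otimes> a) = c \<otimes> \<phi> a"
    and v0: "v0 \<in> carrier R" "\<phi> v0 = \<one>"
    and prod: "\<And>x y. x \<in> set xs \<Longrightarrow> y \<in> set ys \<Longrightarrow> \<phi> (x \<otimes> y) = \<zero>"
  shows False
proof -
  have xsc: "set xs \<subseteq> carrier R" and ysc: "set ys \<subseteq> carrier R"
    using xs ys independent_in_carrier by auto
  have phic: "\<And>a. a \<in> carrier R \<Longrightarrow> \<phi> a \<in> carrier R" using phiK Kc by auto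
  have phi0: "\<phi> \<zero> = \<zero>"
  proof -
    have "\<phi> (\<zero> \<otimes> \<zero>) = \<zero> \<otimes> \<phi> \<zero>" using phihom[of \<zero> \<zero>] subringE(2)[OF subfieldE(1)[OF K]] by blast
    thus ?thesis using phic[of \<zero>] by simp
  qed
  obtain zs where zs: "length (zs @ ys) = n" "independent K (zs @ ys)" "Span K (zs @ ys) = carrier R"
    using complete_base[OF K dim ys ysc] by blast
  have zsi: "independent K zs" using independent_split(2)[OF K zs(2)] .
  have zsc: "set zs \<subseteq> carrier R" using zsi independent_in_carrier by auto
  have lys: "length ys \<le> n" using independent_length_le_dimension[OF K dim ys ysc] .
  define h where "h b = combine (map (\<lambda>z. \<phi> (b \<otimes> z)) zs) zs" for b
  have hadd: "h (a \<oplus> b) = h a \<oplus> h b" if "a \<in> carrier R" "b \<in> carrier R" for a b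
  proof -
    have "h (a \<oplus> b) = combine (map (\<lambda>z. \<phi> (a \<otimes> z) \<oplus> \<phi> (b \<otimes> z)) zs) zs"
      unfolding h_def using that zsc
      by (intro arg_cong2[where f=combine] refl map_cong) (auto simp: l_distr phiadd)
    also have "\<dots> = h a \<oplus> h b" unfolding h_def
      using that zsc by (intro combine_map_add) (auto intro: phic)
    finally show ?thesis .
  qed
  have hhom: "h (c \<otimes> a) = c \<otimes> h a" if "c \<in> K" "a \<in> carrier R" for c a
  proof -
    have cc: "c \<in> carrier R" using that Kc by auto
    have "h (c \<otimes> a) = combine (map (\<lambda>z. c \<otimes> \<phi> (a \<otimes> z)) zs) zs"
      unfolding h_def using that zsc cc
      by (intro arg_cong2[where f=combine] refl map_cong) (auto simp: m_assoc phihom)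
    also have "\<dots> = c \<otimes> h a" unfolding h_def
      using that zsc cc by (intro combine_map_smult) (auto intro: phic)
    finally show ?thesis .
  qed
  have h0: "h \<zero> = \<zero>" unfolding h_def using zsc phi0
    by (intro combine_zero_coeffs) (auto simp: phi0)
  have hspan: "h a \<in> Span K zs" if "a \<in> carrier R" for a
    unfolding Span_mem_iff_length_version[OF K zsc] h_def
    using that zsc phiK by (intro exI[of _ "map (\<lambda>z. \<phi> (a \<otimes> z)) zs"]) auto
  have dep: "dependent K (map h xs)"
  proof
    assume "independent K (map h xs)"
    moreover have "set (map h xs) \<subseteq> Span K zs" using hspan xsc by auto
    ultimately have "length (map h xs) \<le> length zs"
      using independent_length_le[OF K _ zsi] by blast
    thus False using zs(1) len by simp
  qed
  have hxsc: "set (map h xs) \<subseteq> carrier R"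
    using hspan xsc Span_in_carrier[OF Kc zsc] by auto
  obtain Cs where Cs: "length Cs = length (map h xs)" "combine Cs (map h xs) = \<zero>" "set Cs \<subseteq> K" "set Cs \<noteq> {\<zero>}"
    using dependent_imp_non_trivial_combine[OF K hxsc dep] by blast
  have Csc: "set Cs \<subseteq> carrier R" using Cs(3) Kc by auto
  define a where "a = combine Cs xs"
  have ac: "a \<in> carrier R" unfolding a_def using Csc xsc by auto
  have ha: "h a = \<zero>" unfolding a_def
    using combine_linear[OF hadd hhom h0 Cs(3) xsc] Cs(2) by simp
  have anz: "a \<noteq> \<zero>"
  proof
    assume "a = \<zero>"
    hence "set (take (length xs) Cs) \<subseteq> {\<zero>}"
      using independent_imp_trivial_combine[OF K xs Cs(3)] a_def by auto
    hence "set Cs \<subseteq> {\<zero>}" using Cs(1) by simp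
    hence "Cs = []" using Cs(4) by (metis set_empty subset_singletonD)
    thus False using Cs(1) len lys by simp
  qed
  have phiz: "\<phi> (a \<otimes> z) = \<zero>" if "z \<in> set zs" for z
  proof -
    have "set (map (\<lambda>z. \<phi> (a \<otimes> z)) zs) \<subseteq> K" using ac zsc phiK by auto
    hence "set (take (length zs) (map (\<lambda>z. \<phi> (a \<otimes> z)) zs)) \<subseteq> {\<zero>}"
      using independent_imp_trivial_combine[OF K zsi] ha unfolding h_def by blast
    thus ?thesis using that by auto
  qed
  have phiy: "\<phi> (a \<otimes> y) = \<zero>" if "y \<in> set ys" for y
  proof -
    have yc: "y \<in> carrier R" using that ysc by auto
    have "a \<otimes> y = combine Cs (map (\<lambda>x. x \<otimes> y) xs)"
      unfolding a_def using combine_l_distr[OF Csc xsc yc] .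
    hence "\<phi> (a \<otimes> y) = combine Cs (map \<phi> (map (\<lambda>x. x \<otimes> y) xs))"
      using combine_linear[OF phiadd phihom phi0 Cs(3), of "map (\<lambda>x. x \<otimes> y) xs"] xsc yc by auto
    also have "\<dots> = \<zero>" using Csc prod that by (intro combine_zeros) auto
    finally show ?thesis .
  qed
  have phiall: "\<phi> (a \<otimes> b) = \<zero>" if "b \<in> carrier R" for b
  proof -
    have wc: "set (zs @ ys) \<subseteq> carrier R" using zsc ysc by auto
    have "b \<in> Span K (zs @ ys)" using zs(3) that by simp
    hence "\<exists>Ks. set Ks \<subseteq> K \<and> length Ks = length (zs @ ys) \<and> b = combine Ks (zs @ ys)"
      by (simp only: Span_mem_iff_length_version[OF K wc])
    then obtain Ds where Ds: "set Ds \<subseteq> K" "b = combine Ds (zs @ ys)"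
      by blast
    have Dsc: "set Ds \<subseteq> carrier R" using Ds Kc by auto
    have "a \<otimes> b = b \<otimes> a" using ac that by (rule m_comm)
    also have "\<dots> = combine Ds (map (\<lambda>w. w \<otimes> a) (zs @ ys))"
      unfolding Ds(2) by (rule combine_l_distr[OF Dsc wc ac])
    finally have eq: "a \<otimes> b = combine Ds (map (\<lambda>w. w \<otimes> a) (zs @ ys))" .
    have mc: "set (map (\<lambda>w. w \<otimes> a) (zs @ ys)) \<subseteq> carrier R" using wc ac by auto
    have e1: "\<phi> (a \<otimes> b) = combine Ds (map \<phi> (map (\<lambda>w. w \<otimes> a) (zs @ ys)))"
      unfolding eq by (rule combine_linear[OF phiadd phihom phi0 Ds(1) mc])
    have z0: "\<phi> (w \<otimes> a) = \<zero>" if w: "w \<in> set (zs @ ys)" for w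
    proof -
      have "w \<in> carrier R" using wc w by auto
      hence "w \<otimes> a = a \<otimes> w" using ac by (rule m_comm)
      thus ?thesis using w phiz phiy by auto
    qed
    have z: "set (map \<phi> (map (\<lambda>w. w \<otimes> a) (zs @ ys))) \<subseteq> {\<zero>}"
    proof
      fix x assume "x \<in> set (map \<phi> (map (\<lambda>w. w \<otimes> a) (zs @ ys)))"
      then obtain w where "w \<in> set (zs @ ys)" "x = \<phi> (w \<otimes> a)"
        by (simp only: set_map image_comp) auto
      thus "x \<in> {\<zero>}" using z0 by simp
    qed
    show ?thesis using e1 combine_zeros[OF Dsc z] by simp
  qed
  have "a \<in> Units R" using ac anz field_Units by auto
  hence "a \<otimes> (inv a \<otimes> v0) = v0" using v0 ac by (simp add: m_assoc[symmetric])
  moreover have "inv a \<otimes> v0 \<in> carrier R" using \<open>a \<in> Units R\<close> v0 by auto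
  ultimately have "\<phi> v0 = \<zero>" using phiall by metis
  thus False using v0 one_not_zero by simp
qed

lemma functional:
  assumes dim: "dimension n K (carrier R)" and Ps: "set Ps \<subseteq> carrier R"
    and ne: "Span K Ps \<noteq> carrier R"
  obtains \<phi> v0 where "\<And>a. a \<in> carrier R \<Longrightarrow> \<phi> a \<in> K"
    "\<And>a b. a \<in> carrier R \<Longrightarrow> b \<in> carrier R \<Longrightarrow> \<phi> (a \<oplus> b) = \<phi> a \<oplus> \<phi> b"
    "\<And>c a. c \<in> K \<Longrightarrow> a \<in> carrier R \<Longrightarrow> \<phi> (c \<otimes> a) = c \<otimes> \<phi> a"
    "v0 \<in> carrier R" "\<phi> v0 = \<one>"
    "\<And>u. u \<in> Span K Ps \<Longrightarrow> \<phi> u = \<zero>"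
proof -
  obtain us where us: "set us \<subseteq> carrier R" "independent K us" "Span K us = Span K Ps"
    using filter_base[OF K Ps] by blast
  have usU: "set us \<subseteq> carrier R" using us by simp
  obtain Vs where Vs: "length (Vs @ us) = n" "independent K (Vs @ us)" "Span K (Vs @ us) = carrier R"
    using complete_base[OF K dim us(2) usU] by blast
  have "Vs \<noteq> []" using Vs(3) us(3) ne by auto
  then obtain v0 rest' where Vs0: "Vs = v0 # rest'" by (cases Vs) auto
  define H where "H = Span K (rest' @ us)"
  have ind: "independent K (v0 # (rest' @ us))" using Vs(2) Vs0 by simp
  have v0H: "v0 \<notin> H" unfolding H_def using independent_backwards(1)[OF ind] .
  have v0c: "v0 \<in> carrier R" using independent_backwards(3)[OF ind] .
  have rc: "set (rest' @ us) \<subseteq> carrier R" using independent_in_carrier[OF independent_backwards(2)[OF ind]] .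
  have Hc: "H \<subseteq> carrier R" unfolding H_def using Span_in_carrier[OF Kc rc] .
  have carr: "carrier R = line_extension K v0 H" using Vs(3) Vs0 unfolding H_def by simp
  have UH: "Span K Ps \<subseteq> H" unfolding H_def us(3)[symmetric]
    by (rule mono_Span_sublist[OF K _ rc]) auto
  have Hadd: "h \<oplus> h' \<in> H" if "h \<in> H" "h' \<in> H" for h h'
    using that Span_subgroup_props(3)[OF K rc] unfolding H_def by blast
  have Hneg: "\<ominus> h \<in> H" if "h \<in> H" for h
    using that Span_subgroup_props(4)[OF K rc] unfolding H_def by blast
  have Hsm: "c \<otimes> h \<in> H" if "c \<in> K" "h \<in> H" for c h
    using that Span_smult_closed[OF K rc] unfolding H_def by blast
  have H0: "\<zero> \<in> H" using Span_subgroup_props(2)[OF K rc] unfolding H_def by blast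
  have dec: "\<exists>k\<in>K. \<exists>h\<in>H. a = k \<otimes> v0 \<oplus> h" if "a \<in> carrier R" for a
    using that carr line_extension_mem_iff by auto
  have uniq: "k = k'" if "k \<in> K" "k' \<in> K" "h \<in> H" "h' \<in> H" "k \<otimes> v0 \<oplus> h = k' \<otimes> v0 \<oplus> h'" for k k' h h'
  proof (rule ccontr)
    assume nk: "k \<noteq> k'"
    have c: "k \<in> carrier R" "k' \<in> carrier R" "h \<in> carrier R" "h' \<in> carrier R" using that Kc Hc by auto
    have "(k \<ominus> k') \<otimes> v0 = h' \<ominus> h"
    proof -
      have "(k \<ominus> k') \<otimes> v0 = (k \<otimes> v0 \<oplus> h) \<ominus> (k' \<otimes> v0 \<oplus> h) " using c v0c by algebra
      also have "\<dots> = (k' \<otimes> v0 \<oplus> h') \<ominus> (k' \<otimes> v0 \<oplus> h)" using that(5) by simp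
      also have "\<dots> = h' \<ominus> h" using c v0c by algebra
      finally show ?thesis .
    qed
    moreover have "h' \<ominus> h \<in> H" unfolding minus_eq using that Hadd Hneg by auto
    moreover have "k \<ominus> k' \<in> K - {\<zero>}"
    proof -
      have "k \<ominus> k' \<in> K" unfolding minus_eq using that subringE(5,7)[OF subfieldE(1)[OF K]] by auto
      moreover have "k \<ominus> k' \<noteq> \<zero>" using nk c by (metis r_right_minus_eq)
      ultimately show ?thesis by auto
    qed
    ultimately have "v0 \<in> H" using Span_m_inv_simprule[OF K rc _ v0c] unfolding H_def by auto
    thus False using v0H by simp
  qed
  define \<phi> where "\<phi> a = (THE k. k \<in> K \<and> (\<exists>h\<in>H. a = k \<otimes> v0 \<oplus> h))" for a
  have phieq: "\<phi> (k \<otimes> v0 \<oplus> h) = k" if "k \<in> K" "h \<in> H" for k h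
    unfolding \<phi>_def
  proof (rule the_equality)
    show "k \<in> K \<and> (\<exists>h'\<in>H. k \<otimes> v0 \<oplus> h = k \<otimes> v0 \<oplus> h')" using that by auto
  next
    fix k' assume "k' \<in> K \<and> (\<exists>h'\<in>H. k \<otimes> v0 \<oplus> h = k' \<otimes> v0 \<oplus> h')"
    thus "k' = k" using uniq that by metis
  qed
  show ?thesis
  proof (rule that)
    show "\<phi> a \<in> K" if "a \<in> carrier R" for a
      using dec[OF that] phieq by auto
    show "\<phi> (a \<oplus> b) = \<phi> a \<oplus> \<phi> b" if ab: "a \<in> carrier R" "b \<in> carrier R" for a b
    proof -
      obtain k h where kh: "k \<in> K" "h \<in> H" "a = k \<otimes> v0 \<oplus> h" using dec[OF ab(1)] by blast
      obtain k' h' where kh': "k' \<in> K" "h' \<in> H" "b = k' \<otimes> v0 \<oplus> h'" using dec[OF ab(2)] by blast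
      have c: "k \<in> carrier R" "k' \<in> carrier R" "h \<in> carrier R" "h' \<in> carrier R" using kh kh' Kc Hc by auto
      have "a \<oplus> b = (k \<oplus> k') \<otimes> v0 \<oplus> (h \<oplus> h')" unfolding kh kh' using c v0c by algebra
      moreover have "k \<oplus> k' \<in> K" using kh kh' subringE(7)[OF subfieldE(1)[OF K]] by auto
      ultimately show ?thesis using phieq kh kh' Hadd by simp
    qed
    show "\<phi> (c \<otimes> a) = c \<otimes> \<phi> a" if ca: "c \<in> K" "a \<in> carrier R" for c a
    proof -
      obtain k h where kh: "k \<in> K" "h \<in> H" "a = k \<otimes> v0 \<oplus> h" using dec[OF ca(2)] by blast
      have c: "k \<in> carrier R" "c \<in> carrier R" "h \<in> carrier R" using kh ca Kc Hc by auto
      have "c \<otimes> a = (c \<otimes> k) \<otimes> v0 \<oplus> (c \<otimes> h)" unfolding kh using c v0c by algebra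
      moreover have "c \<otimes> k \<in> K" using kh ca subringE(6)[OF subfieldE(1)[OF K]] by auto
      ultimately show ?thesis using phieq kh ca Hsm by simp
    qed
    show "v0 \<in> carrier R" by (rule v0c)
    have "v0 = \<one> \<otimes> v0 \<oplus> \<zero>" using v0c by simp
    moreover have "\<one> \<in> K" using subringE(3)[OF subfieldE(1)[OF K]] .
    ultimately show "\<phi> v0 = \<one>" using phieq H0 by metis
    show "\<phi> u = \<zero>" if "u \<in> Span K Ps" for u
    proof -
      have uH: "u \<in> H" using that UH by auto
      hence "u = \<zero> \<otimes> v0 \<oplus> u" using v0c Hc by auto
      moreover have "\<zero> \<in> K" using subringE(2)[OF subfieldE(1)[OF K]] .
      ultimately show ?thesis using phieq uH by metis
    qed
  qed
qed

end
end

theorem mainTheorem3: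
  fixes L (structure) and K :: "'a set" and n :: nat
    and xs ys :: "'a list"
  assumes "field L"
    and "subfield K L"
    and "ring.dimension L n K (carrier L)"
    and "set xs \<subseteq> carrier L" and "set ys \<subseteq> carrier L"
    and "ring.independent L K xs"
    and "ring.independent L K ys"
    and "length xs + length ys \<ge> n + 1"
  shows "ring.Span L K [x \<otimes>\<^bsub>L\<^esub> y. x \<leftarrow> xs, y \<leftarrow> ys] = carrier L"
proof -
  interpret field L by fact
  have K: "subfield K L" by fact
  define Ps where "Ps = [x \<otimes>\<^bsub>L\<^esub> y. x \<leftarrow> xs, y \<leftarrow> ys]"
  have Ps: "set Ps \<subseteq> carrier L" using assms(4,5) by (auto simp: Ps_def)
  show ?thesis unfolding Ps_def[symmetric]
  proof (rule ccontr)
    assume ne: "Span K Ps \<noteq> carrier L"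
    obtain \<phi> v0 where phi: "\<And>a. a \<in> carrier L \<Longrightarrow> \<phi> a \<in> K"
      "\<And>a b. a \<in> carrier L \<Longrightarrow> b \<in> carrier L \<Longrightarrow> \<phi> (a \<oplus> b) = \<phi> a \<oplus> \<phi> b"
      "\<And>c a. c \<in> K \<Longrightarrow> a \<in> carrier L \<Longrightarrow> \<phi> (c \<otimes> a) = c \<otimes> \<phi> a"
      "v0 \<in> carrier L" "\<phi> v0 = \<one>"
      "\<And>u. u \<in> Span K Ps \<Longrightarrow> \<phi> u = \<zero>"
      using functional[OF K assms(3) Ps ne] by blast
    have prod: "\<phi> (x \<otimes> y) = \<zero>" if "x \<in> set xs" "y \<in> set ys" for x y
    proof -
      have "x \<otimes> y \<in> set Ps" using that by (auto simp: Ps_def)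
      hence "x \<otimes> y \<in> Span K Ps" using Span_base_incl[OF K Ps] by auto
      thus ?thesis using phi(6) by simp
    qed
    show False
      using key[OF K assms(3) assms(6) assms(7) assms(8) phi(1) phi(2) phi(3) phi(4) phi(5) prod] .
  qed
qed

end
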